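(* As formal power series in $z$ with coefficients polynomials in $t$, \[ F(t,z)=\sum_{n\ge 0}\sum_{w\in S_n} t^{\operatorname{dep}(w)} z^n = \cfrac{1}{1 - \cfrac{z}{1 - \cfrac{tz}{1 - \cfrac{2tz}{1 - \cfrac{2t^2 z}{1 - \cfrac{3t^2 z}{1 - \cfrac{3t^3 z}{1-\cdots}}}}}}}, \] the $S$-fraction in which, numbering the partial numerators $c_0 z, c_1 z, c_2 z,\dots$ starting from $c_0 z = z$, one has $c_{2k}=(k+1)t^k$ and $c_{2k+1}=(k+1)t^{k+1}$ for all $k\ge 0$.
   Context: $S_0$ consists of the single empty permutation, of depth $0$. For $w\in S_n$, the depth is $\operatorname{dep}(w)=\sum_{i:\,w(i)>i}(w(i)-i)$, i.e. half the total displacement $\sum_{i=1}^n |w(i)-i|$. *)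

theory Defs
  imports "HOL-Combinatorics.Permutations"
    "HOL-Computational_Algebra.Formal_Power_Series"
    "HOL-Computational_Algebra.Fraction_Field"
    "HOL-Computational_Algebra.Polynomial"
begin

definition dep :: "nat \<Rightarrow> (nat \<Rightarrow> nat) \<Rightarrow> nat" where
  "dep n w = (\<Sum>i\<in>{1..n}. if w i > i then w i - i else 0)"

definition depPoly :: "nat \<Rightarrow> int poly" where
  "depPoly n = (\<Sum>w\<in>{w. w permutes {1..n}}. monom 1 (dep n w))"

(* embed polynomials in t into their fraction field, so that power series in z
   over it can be inverted *)
abbreviation emb :: "int poly \<Rightarrow> int poly fract" where
  "emb p \<equiv> Fract p 1"

definition F :: "int poly fract fps" where
  "F = Abs_fps (\<lambda>n. emb (depPoly n))"

definition cS :: "nat \<Rightarrow> int poly" where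
  "cS j = (if even j then monom (int (j div 2 + 1)) (j div 2)
                     else monom (int (j div 2 + 1)) (j div 2 + 1))"

fun Sfrac :: "(nat \<Rightarrow> int poly) \<Rightarrow> nat \<Rightarrow> nat \<Rightarrow> int poly fract fps" where
  "Sfrac c 0 k = 1"
| "Sfrac c (Suc m) k = inverse (1 - fps_const (emb (c k)) * fps_X * Sfrac c m (Suc k))"

end

theory Submission
  imports Defs
begin

unbundle fps_syntax



definition agr :: "nat \<Rightarrow> 'a fps \<Rightarrow> 'a fps \<Rightarrow> bool" where
  "agr m A B \<longleftrightarrow> (\<forall>i\<le>m. A $ i = B $ i)"

lemma agr_mult: "agr m A B \<Longrightarrow> agr m (C * A) (C * (B::'a::comm_ring_1 fps))"
  unfolding agr_def fps_mult_nth by (auto intro!: sum.cong)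

lemma agr_mult_r: "agr m A B \<Longrightarrow> agr m (A * C) (B * (C::'a::comm_ring_1 fps))"
  using agr_mult[of m A B C] by (simp add: mult.commute)

lemma agr_X: "agr m A B \<Longrightarrow> agr (Suc m) (fps_X * A) (fps_X * (B::'a::comm_ring_1 fps))"
  unfolding agr_def by (auto simp: fps_X_mult_nth)

lemma agr_diff: "agr m A B \<Longrightarrow> agr m (C - A) (C - (B::'a::comm_ring_1 fps))"
  unfolding agr_def by auto

lemma agr_sym: "agr m A B \<Longrightarrow> agr m B A" unfolding agr_def by auto
lemma agr_trans: "agr m A B \<Longrightarrow> agr m B C \<Longrightarrow> agr m A C" unfolding agr_def by auto
lemma agr_mono: "agr m A B \<Longrightarrow> i \<le> m \<Longrightarrow> agr i A B" unfolding agr_def by auto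

lemma agr_inv:
  fixes P Q :: "'a::field fps"
  assumes "agr m P Q" "P $ 0 \<noteq> 0"
  shows "agr m (inverse P) (inverse Q)"
proof -
  have q0: "Q $ 0 \<noteq> 0" using assms unfolding agr_def by auto
  have "agr m (inverse Q * P) (inverse Q * Q)" by (rule agr_mult[OF assms(1)])
  hence "agr m (inverse Q * P) 1" using q0 by (simp add: inverse_mult_eq_1)
  hence "agr m (inverse Q * P * inverse P) (1 * inverse P)" by (rule agr_mult_r)
  hence "agr m (inverse Q) (inverse P)"
    using assms(2) by (simp add: mult.assoc inverse_mult_eq_1')
  thus ?thesis by (rule agr_sym)
qed

lemma Sfrac0: "Sfrac c m k $ 0 = 1"
  by (cases m) auto

lemma Sfrac_stab: "agr m (Sfrac c m k) (Sfrac c (Suc m) k)"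
proof (induction m arbitrary: k)
  case 0
  then show ?case by (simp add: agr_def Sfrac0)
next
  case (Suc m)
  have "agr (Suc m) (fps_X * Sfrac c m (Suc k)) (fps_X * Sfrac c (Suc m) (Suc k))"
    by (rule agr_X[OF Suc])
  hence "agr (Suc m) (1 - fps_const (emb (c k)) * (fps_X * Sfrac c m (Suc k)))
             (1 - fps_const (emb (c k)) * (fps_X * Sfrac c (Suc m) (Suc k)))"
    by (rule agr_diff[OF agr_mult])
  hence "agr (Suc m) (inverse (1 - fps_const (emb (c k)) * (fps_X * Sfrac c m (Suc k))))
             (inverse (1 - fps_const (emb (c k)) * (fps_X * Sfrac c (Suc m) (Suc k))))"
    by (rule agr_inv) simp
  thus ?case by (simp add: mult.assoc)
qed

lemma Sfrac_stab2: "i \<le> m \<Longrightarrow> agr i (Sfrac c i k) (Sfrac c m k)"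
proof (induction m)
  case 0 thus ?case by (simp add: agr_def)
next
  case (Suc m)
  show ?case
  proof (cases "i = Suc m")
    case True thus ?thesis by (simp add: agr_def)
  next
    case False
    hence "agr i (Sfrac c i k) (Sfrac c m k)" using Suc by auto
    moreover have "agr i (Sfrac c m k) (Sfrac c (Suc m) k)"
      using agr_mono[OF Sfrac_stab] False Suc.prems by auto
    ultimately show ?thesis by (rule agr_trans)
  qed
qed

definition tlS :: "nat \<Rightarrow> int poly fract fps" where
  "tlS k = Abs_fps (\<lambda>i. Sfrac cS i k $ i)"

lemma tlS_nth: "tlS k $ i = Sfrac cS i k $ i"
  unfolding tlS_def by (rule fps_nth_Abs_fps)

lemma tlS_agr: "agr m (tlS k) (Sfrac cS m k)"
  unfolding agr_def tlS_nth using Sfrac_stab2 unfolding agr_def by auto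

lemma tlS_eq: "tlS k = inverse (1 - fps_const (emb (cS k)) * fps_X * tlS (Suc k))"
proof (rule fps_ext)
  fix n
  show "tlS k $ n = inverse (1 - fps_const (emb (cS k)) * fps_X * tlS (Suc k)) $ n"
  proof (cases n)
    case 0 thus ?thesis by (simp add: tlS_nth Sfrac0)
  next
    case (Suc n')
    have "agr (Suc n') (fps_X * tlS (Suc k)) (fps_X * Sfrac cS n' (Suc k))"
      by (rule agr_X[OF tlS_agr])
    hence "agr (Suc n') (1 - fps_const (emb (cS k)) * (fps_X * tlS (Suc k)))
             (1 - fps_const (emb (cS k)) * (fps_X * Sfrac cS n' (Suc k)))"
      by (rule agr_diff[OF agr_mult])
    hence "agr (Suc n') (inverse (1 - fps_const (emb (cS k)) * (fps_X * tlS (Suc k))))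
             (inverse (1 - fps_const (emb (cS k)) * (fps_X * Sfrac cS n' (Suc k))))"
      by (rule agr_inv) simp
    hence "inverse (1 - fps_const (emb (cS k)) * fps_X * tlS (Suc k)) $ n = Sfrac cS n k $ n"
      unfolding agr_def using Suc by (simp add: mult.assoc)
    thus ?thesis by (simp add: tlS_nth)
  qed
qed

lemma tlS_rel: "tlS k = 1 + fps_const (emb (cS k)) * fps_X * tlS (Suc k) * tlS k"
proof -
  let ?P = "1 - fps_const (emb (cS k)) * fps_X * tlS (Suc k)"
  have "?P $ 0 \<noteq> 0" by simp
  hence "?P * inverse ?P = 1" by (rule inverse_mult_eq_1')
  hence "?P * tlS k = 1" using tlS_eq[of k] by simp
  thus ?thesis by (simp add: algebra_simps)
qed

lemma conv: "(\<lambda>m. Sfrac cS m 0) \<longlonglongrightarrow> tlS 0"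
proof (rule tendsto_fpsI)
  fix n
  show "eventually (\<lambda>m. Sfrac cS m 0 $ n = tlS 0 $ n) sequentially"
    using eventually_ge_at_top[of n]
    by eventually_elim (use tlS_agr in \<open>auto simp: agr_def\<close>)
qed




lemma J_lem:
  fixes f1 f2 f3 f4 X c1 c2 c3 :: "'a::comm_ring_1"
  assumes "f1 = 1 + c1*X*f2*f1" "f2 = 1 + c2*X*f3*f2" "f3 = 1 + c3*X*f4*f3"
  shows "f1*f2 = 1 + (c1+c2)*X*(f1*f2) + c2*c3*X^2*(f1*f2)*(f3*f4)"
proof -
  have "f1*f2 - (1 + (c1+c2)*X*(f1*f2) + c2*c3*X^2*(f1*f2)*(f3*f4))
     = (f2 - (1 + c2*X*f3*f2))*f1 + (f3 - (1 + c3*X*f4*f3))*(c2*X*f1*f2) + (f1 - (1 + c1*X*f2*f1))"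
    by (simp add: algebra_simps power2_eq_square)
  also have "\<dots> = 0" using assms by simp
  finally show ?thesis by simp
qed

lemma A_gen:
  fixes g g' X B L K0 K1 K2 N Th M Bh Q :: "'a::comm_ring_1"
  assumes g: "g = 1 + B*X*g + L*X^2*g*g'" and "K1 = K0 * N * Th" "K2 = K1 * M" "B = Th*Bh" "L = Th*M"
  shows "K1 * X^(Suc k) * (Q*g) = X*(Th*(Bh*(K1*X^(Suc k)*(Q*g)) + N*(K0*X^k*Q) + K2*X^(Suc(Suc k))*(Q*g*g')))"
proof -
  have "X*(Th*(Bh*(K1*X^(Suc k)*(Q*g)) + N*(K0*X^k*Q) + K2*X^(Suc(Suc k))*(Q*g*g')))
      = K1 * X^(Suc k) * Q * (1 + B*X*g + L*X^2*g*g')"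
    by (simp add: assms(2-5) power2_eq_square algebra_simps)
  also have "\<dots> = K1 * X^(Suc k) * (Q*g)" using g by simp
  finally show ?thesis by simp
qed

lemma A0_gen:
  fixes f0 f1 f2 X c1 :: "'a::comm_ring_1"
  assumes "f0 = 1 + X*f1*f0" "f1 = 1 + c1*X*f2*f1"
  shows "f0 = 1 + X*(f0 + c1*X*(f0*f1*f2))"
proof -
  have "f0 - (1 + X*(f0 + c1*X*(f0*f1*f2))) = (f0 - (1 + X*f1*f0)) + (f1 - (1 + c1*X*f2*f1)) * (X*f0)"
    by (simp add: algebra_simps)
  also have "\<dots> = 0" using assms by simp
  finally show ?thesis by simp
qed

fun ap :: "nat \<Rightarrow> nat \<Rightarrow> int poly" where
  "ap 0 h = (if h = 0 then 1 else 0)"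
| "ap (Suc n) h = monom 1 h * (of_nat (2*h+1) * ap n h + of_nat (h*h) * ap n (h-1) + ap n (Suc h))"

definition T :: "nat \<Rightarrow> int poly fract" where "T h = emb (monom 1 h)"

fun K :: "nat \<Rightarrow> int poly fract" where
  "K 0 = 1"
| "K (Suc h) = K h * of_nat (Suc h * Suc h) * T (Suc h)"

definition PP :: "nat \<Rightarrow> int poly fract fps" where "PP h = prod tlS {..2*h}"
definition AA :: "nat \<Rightarrow> int poly fract fps" where "AA h = fps_const (K h) * fps_X ^ h * PP h"

lemma emb_mult: "emb (p*q) = emb p * emb q" by simp
lemma emb_add: "emb (p+q) = emb p + emb q" by simp
lemma emb_of_nat: "emb (of_nat k) = of_nat k" by (rule Fract_of_nat_eq)
lemma emb_1: "emb 1 = 1" by (simp add: One_fract_def)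
lemma emb_0: "emb 0 = 0" by (simp add: Zero_fract_def)

lemma T0: "T 0 = 1" by (simp add: T_def emb_1 flip: one_poly_eq_simps(1)) 
lemma T_add: "T (i+j) = T i * T j" by (simp add: T_def mult_monom)

lemma monom_int: "monom (int c) k = of_nat c * monom 1 k"
  by (simp add: of_nat_poly smult_monom)

lemma cS_even: "emb (cS (2*k)) = of_nat (Suc k) * T k"
proof -
  have "cS (2*k) = monom (int (Suc k)) k" by (simp add: cS_def)
  also have "\<dots> = of_nat (Suc k) * monom 1 k" by (rule monom_int)
  finally have "cS (2*k) = of_nat (Suc k) * monom 1 k" .
  thus ?thesis by (simp only: T_def emb_mult emb_of_nat)
qed
lemma cS_odd: "emb (cS (Suc (2*k))) = of_nat (Suc k) * T (Suc k)"
proof -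
  have "cS (Suc (2*k)) = monom (int (Suc k)) (Suc k)" by (simp add: cS_def)
  also have "\<dots> = of_nat (Suc k) * monom 1 (Suc k)" by (rule monom_int)
  finally have "cS (Suc (2*k)) = of_nat (Suc k) * monom 1 (Suc k)" .
  thus ?thesis by (simp only: T_def emb_mult emb_of_nat)
qed




lemma PP_Suc: "PP (Suc k) = PP k * (tlS (Suc (2*k)) * tlS (Suc (Suc (2*k))))"
  by (simp add: PP_def mult.assoc)

lemma PP_0: "PP 0 = tlS 0" by (simp add: PP_def)

lemma AA_rec0: "AA 0 = 1 + fps_X * (fps_const (T 0) * (fps_const (of_nat (2*0+1)) * AA 0 + fps_const (of_nat (0*0)) * AA (0-1) + AA (Suc 0)))"
proof -
  have c0: "emb (cS 0) = 1" using cS_even[of 0] by (simp add: T0)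
  have c1: "emb (cS 1) = K 1" using cS_odd[of 0] by simp
  have r0: "tlS 0 = 1 + fps_X * tlS 1 * tlS 0" using tlS_rel[of 0] c0 by simp
  have r1: "tlS 1 = 1 + fps_const (K 1) * fps_X * tlS 2 * tlS 1" using tlS_rel[of 1] c1 by (simp add: numeral_2_eq_2)
  have "tlS 0 = 1 + fps_X * (tlS 0 + fps_const (K 1) * fps_X * (tlS 0 * tlS 1 * tlS 2))"
    by (rule A0_gen[OF r0 r1])
  moreover have "AA 0 = tlS 0" by (simp add: AA_def PP_0)
  moreover have "AA 1 = fps_const (K 1) * fps_X * (tlS 0 * tlS 1 * tlS 2)"
    by (simp add: AA_def PP_Suc PP_0 numeral_2_eq_2 mult.assoc)
  ultimately show ?thesis by (simp add: T0)
qed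

lemma AA_recS: "AA (Suc k) = fps_X * (fps_const (T (Suc k)) * (fps_const (of_nat (2*Suc k+1)) * AA (Suc k) + fps_const (of_nat (Suc k*Suc k)) * AA k + AA (Suc (Suc k))))"
proof -
  define f1 where "f1 = tlS (Suc (2*k))"
  define f2 where "f2 = tlS (Suc (Suc (2*k)))"
  define f3 where "f3 = tlS (Suc (Suc (Suc (2*k))))"
  define f4 where "f4 = tlS (Suc (Suc (Suc (Suc (2*k)))))"
  define c1 where "c1 = fps_const (of_nat (Suc k) * T (Suc k))"
  define c2 where "c2 = fps_const (of_nat (Suc (Suc k)) * T (Suc k))"
  define c3 where "c3 = fps_const (of_nat (Suc (Suc k)) * T (Suc (Suc k)))"
  have e1: "emb (cS (Suc (2*k))) = of_nat (Suc k) * T (Suc k)" by (rule cS_odd)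
  have e2: "emb (cS (Suc (Suc (2*k)))) = of_nat (Suc (Suc k)) * T (Suc k)"
    using cS_even[of "Suc k"] by simp
  have e3: "emb (cS (Suc (Suc (Suc (2*k))))) = of_nat (Suc (Suc k)) * T (Suc (Suc k))"
    using cS_odd[of "Suc k"] by simp
  have r1: "f1 = 1 + c1*fps_X*f2*f1" unfolding f1_def f2_def c1_def using tlS_rel[of "Suc (2*k)"] e1 by simp
  have r2: "f2 = 1 + c2*fps_X*f3*f2" unfolding f3_def f2_def c2_def using tlS_rel[of "Suc (Suc (2*k))"] e2 by simp
  have r3: "f3 = 1 + c3*fps_X*f4*f3" unfolding f3_def f4_def c3_def using tlS_rel[of "Suc (Suc (Suc (2*k)))"] e3 by simp
  have J: "f1*f2 = 1 + (c1+c2)*fps_X*(f1*f2) + c2*c3*fps_X^2*(f1*f2)*(f3*f4)"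
    by (rule J_lem[OF r1 r2 r3])
  have pp1: "PP (Suc k) = PP k * (f1*f2)" unfolding f1_def f2_def by (rule PP_Suc)
  have pp2: "PP (Suc (Suc k)) = PP k * (f1*f2) * (f3*f4)" unfolding pp1[symmetric] f3_def f4_def
    using PP_Suc[of "Suc k"] by simp
  have "fps_const (K (Suc k)) * fps_X^(Suc k) * (PP k * (f1*f2)) = fps_X*(fps_const (T (Suc k))*(fps_const (of_nat (2*Suc k+1))*(fps_const (K (Suc k))*fps_X^(Suc k)*(PP k * (f1*f2)))
     + fps_const (of_nat (Suc k*Suc k))*(fps_const (K k)*fps_X^k*PP k) + fps_const (K (Suc (Suc k)))*fps_X^(Suc(Suc k))*(PP k * (f1*f2)*(f3*f4))))"
  proof (rule A_gen[OF J])
    show "fps_const (K (Suc k)) = fps_const (K k) * fps_const (of_nat (Suc k * Suc k)) * fps_const (T (Suc k))"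
      by simp
    show "fps_const (K (Suc (Suc k))) = fps_const (K (Suc k)) * fps_const (of_nat (Suc (Suc k) * Suc (Suc k)) * T (Suc (Suc k)))"
      by (simp add: mult.assoc)
    show "c1 + c2 = fps_const (T (Suc k)) * fps_const (of_nat (2 * Suc k + 1))"
    proof -
      have "of_nat (Suc k) * T (Suc k) + of_nat (Suc (Suc k)) * T (Suc k) = T (Suc k) * of_nat (2*Suc k+1)"
        by (simp add: algebra_simps)
      hence "fps_const (of_nat (Suc k) * T (Suc k) + of_nat (Suc (Suc k)) * T (Suc k)) = fps_const (T (Suc k) * of_nat (2*Suc k+1))"
        by (rule arg_cong)
      thus ?thesis unfolding c1_def c2_def fps_const_add fps_const_mult .
    qed
    show "c2 * c3 = fps_const (T (Suc k)) * fps_const (of_nat (Suc (Suc k) * Suc (Suc k)) * T (Suc (Suc k)))"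
      unfolding c2_def c3_def by (simp add: algebra_simps)
  qed
  thus ?thesis by (simp add: AA_def pp1 pp2)
qed

lemma AA_rec: "AA h = (if h = 0 then 1 else 0) + fps_X * (fps_const (T h) * (fps_const (of_nat (2*h+1)) * AA h + fps_const (of_nat (h*h)) * AA (h-1) + AA (Suc h)))"
  using AA_rec0 AA_recS[of "h-1"] by (cases h) auto

lemma AA_nth: "AA h $ n = emb (ap n h)"
proof (induction n arbitrary: h)
  case 0
  have "AA h $ 0 = (if h = 0 then 1 else 0)" by (subst AA_rec) simp
  thus ?case by (simp add: emb_1 emb_0)
next
  case (Suc n)
  have "AA h $ Suc n = T h * (of_nat (2*h+1) * AA h $ n + of_nat (h*h) * AA (h-1) $ n + AA (Suc h) $ n)"
    by (subst AA_rec) (simp add: fps_X_mult_nth)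
  also have "\<dots> = emb (ap (Suc n) h)"
    by (simp only: Suc.IH ap.simps emb_mult emb_add emb_of_nat T_def)
  finally show ?case .
qed



definition Obj :: "nat \<Rightarrow> nat set \<Rightarrow> nat set \<Rightarrow> (nat \<Rightarrow> nat) set" where
  "Obj n P V = {f. bij_betw f ({1..n} \<union> P) ({1..n} \<union> V) \<and> f ` P \<subseteq> {1..n} \<and> (\<forall>x. x \<notin> {1..n} \<union> P \<longrightarrow> f x = x)}"

definition dd :: "nat \<Rightarrow> (nat \<Rightarrow> nat) \<Rightarrow> nat" where
  "dd n f = (\<Sum>j\<in>{1..n}. card {x\<in>{1..j}. j < f x})"

definition G :: "nat \<Rightarrow> nat set \<Rightarrow> nat set \<Rightarrow> int poly" where
  "G n P V = (\<Sum>f\<in>Obj n P V. monom 1 (dd n f))"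

definition good :: "nat \<Rightarrow> nat set \<Rightarrow> nat set \<Rightarrow> bool" where
  "good n P V \<longleftrightarrow> finite P \<and> finite V \<and> P \<subseteq> {n<..} \<and> V \<subseteq> {n<..} \<and> card P = card V"

lemma H1: "bij_betw f A B \<Longrightarrow> a \<in> A \<Longrightarrow> bij_betw f (A - {a}) (B - {f a})"
  by (rule bij_betw_DiffI) (auto simp: bij_betw_def)

lemma H2: "bij_betw f A B \<Longrightarrow> a \<notin> A \<Longrightarrow> b \<notin> B \<Longrightarrow> bij_betw (f(a:=b)) (insert a A) (insert b B)"
  unfolding bij_betw_def inj_on_def by (auto simp: image_def)

lemma finite_Obj:
  assumes "finite P" "finite V"
  shows "finite (Obj n P V)"
proof -
  let ?D = "{1..n} \<union> P" and ?R = "{1..n} \<union> V"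
  have "inj_on (\<lambda>f. restrict f ?D) (Obj n P V)"
  proof (rule inj_onI)
    fix f g assume f: "f \<in> Obj n P V" and g: "g \<in> Obj n P V" and e: "restrict f ?D = restrict g ?D"
    show "f = g"
    proof
      fix x show "f x = g x"
        using f g e unfolding Obj_def by (cases "x \<in> ?D") (auto dest: fun_cong[of _ _ x])
    qed
  qed
  moreover have "(\<lambda>f. restrict f ?D) ` Obj n P V \<subseteq> PiE ?D (\<lambda>_. ?R)"
  proof
    fix g assume "g \<in> (\<lambda>f. restrict f ?D) ` Obj n P V"
    then obtain f where f: "f \<in> Obj n P V" "g = restrict f ?D" by blast
    have bij: "bij_betw f ?D ?R" using f(1) unfolding Obj_def by blast
    have "\<forall>x\<in>?D. f x \<in> ?R" using bij_betw_apply[OF bij] by blast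
    thus "g \<in> PiE ?D (\<lambda>_. ?R)" using f(2) by (simp add: restrict_PiE_iff)
  qed
  moreover have "finite (PiE ?D (\<lambda>_. ?R))"
    using assms by (intro finite_PiE) auto
  ultimately show ?thesis by (meson finite_imageD finite_subset)
qed

lemma GL:
  assumes "finite S" "finite B" "\<And>f. f \<in> S \<Longrightarrow> \<exists>!b. b \<in> B \<and> R f b"
  shows "(\<Sum>b\<in>B. \<Sum>f\<in>{f\<in>S. R f b}. g f) = (\<Sum>f\<in>S. g f)"
proof -
  have "(\<Sum>b\<in>B. \<Sum>f\<in>{f\<in>S. R f b}. g f) = (\<Sum>f\<in>S. \<Sum>b\<in>{b\<in>B. R f b}. g f)"
    using sum.swap_restrict[OF assms(1,2), of "\<lambda>f b. g f" R] by simp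
  also have "\<dots> = (\<Sum>f\<in>S. g f)"
  proof (rule sum.cong[OF refl])
    fix f assume "f \<in> S"
    then obtain b where "{b\<in>B. R f b} = {b}" using assms(3) by blast
    thus "(\<Sum>b\<in>{b\<in>B. R f b}. g f) = g f" by simp
  qed
  finally show ?thesis .
qed

lemma dd_Suc: "dd (Suc m) f = dd m f + card {x\<in>{1..Suc m}. Suc m < f x}"
  unfolding dd_def by (simp add: sum.cl_ivl_Suc)

lemma dd_cong:
  assumes "\<And>x. x \<in> {1..m} \<Longrightarrow> f x = g x \<or> (m < f x \<and> m < g x)"
  shows "dd m f = dd m g"
  unfolding dd_def
proof (rule sum.cong[OF refl])
  fix j assume j: "j \<in> {1..m}"
  have "{x\<in>{1..j}. j < f x} = {x\<in>{1..j}. j < g x}"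
  proof (intro Collect_cong conj_cong refl)
    fix x assume "x \<in> {1..j}"
    hence "x \<in> {1..m}" using j by auto
    thus "(j < f x) = (j < g x)" using assms[of x] j by auto
  qed
  thus "card {x\<in>{1..j}. j < f x} = card {x\<in>{1..j}. j < g x}" by simp
qed

lemma card_cross:
  assumes "good n P V" "f \<in> Obj n P V"
  shows "card {x\<in>{1..n}. n < f x} = card V"
proof -
  let ?D = "{1..n} \<union> P" and ?R = "{1..n} \<union> V"
  from assms have bij: "bij_betw f ?D ?R" and fP: "f ` P \<subseteq> {1..n}"
    and V: "V \<subseteq> {n<..}" and P: "P \<subseteq> {n<..}" unfolding Obj_def good_def by auto
  let ?Z = "{x\<in>{1..n}. n < f x}"
  have "f ` ?Z = V"
  proof
    show "f ` ?Z \<subseteq> V"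
    proof
      fix y assume "y \<in> f ` ?Z"
      then obtain x where x: "x \<in> ?Z" "y = f x" by blast
      hence "x \<in> ?D" by auto
      hence "f x \<in> ?R" using bij by (rule bij_betw_apply[rotated])
      thus "y \<in> V" using x by auto
    qed
    show "V \<subseteq> f ` ?Z"
    proof
      fix v assume v: "v \<in> V"
      then obtain x where x: "x \<in> ?D" "f x = v" using bij unfolding bij_betw_def by (metis UnCI imageE)
      have "x \<notin> P" using fP x v V by force
      thus "v \<in> f ` ?Z" using x v V by force
    qed
  qed
  moreover have "inj_on f ?D" using bij by (simp add: bij_betw_def)
  hence "inj_on f ?Z" by (rule inj_on_subset) auto
  ultimately show ?thesis using card_image by metis
qed



context
  fixes m :: nat and P V :: "nat set"
  assumes gd: "good (Suc m) P V"
begin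

lemma finP: "finite P" and finV: "finite V" and Pgt: "\<And>p. p \<in> P \<Longrightarrow> Suc m < p"
  and Vgt: "\<And>v. v \<in> V \<Longrightarrow> Suc m < v" and cardPV: "card P = card V"
  using gd unfolding good_def by auto

lemma Dn: "{1..Suc m} \<union> P = insert (Suc m) ({1..m} \<union> P)" by auto
lemma Rn: "{1..Suc m} \<union> V = insert (Suc m) ({1..m} \<union> V)" by auto

lemma nD: "Suc m \<notin> {1..m} \<union> P" using Pgt by auto
lemma nR: "Suc m \<notin> {1..m} \<union> V" using Vgt by auto

lemma objD:
  assumes "f \<in> Obj (Suc m) P V"
  shows "bij_betw f (insert (Suc m) ({1..m} \<union> P)) (insert (Suc m) ({1..m} \<union> V))"
    and "f ` P \<subseteq> {1..Suc m}"
    and "\<And>x. x \<notin> insert (Suc m) ({1..m} \<union> P) \<Longrightarrow> f x = x"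
  using assms unfolding Obj_def Dn[symmetric] Rn[symmetric] by auto

lemma objD_inj:
  assumes "f \<in> Obj (Suc m) P V" "x \<in> insert (Suc m) ({1..m} \<union> P)" "y \<in> insert (Suc m) ({1..m} \<union> P)"
    "f x = f y"
  shows "x = y"
  using objD(1)[OF assms(1)] assms(2-4) unfolding bij_betw_def inj_on_def by blast

lemma wt:
  assumes "f \<in> Obj (Suc m) P V" "\<And>x. x \<in> {1..m} \<Longrightarrow> f x = g x \<or> (m < f x \<and> m < g x)"
  shows "monom 1 (dd (Suc m) f) = monom 1 (card V) * monom (1::int) (dd m g)"
proof -
  have "dd (Suc m) f = dd m g + card V"
    using dd_Suc[of m f] card_cross[OF gd assms(1)] dd_cong[of m f g, OF assms(2)] by simp
  thus ?thesis by (simp add: mult_monom add.commute)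
qed

lemma blockA:
  "(\<Sum>f\<in>{f\<in>Obj (Suc m) P V. f (Suc m) = Suc m}. monom 1 (dd (Suc m) f)) = monom 1 (card V) * G m P V"
proof -
  have eq: "{f\<in>Obj (Suc m) P V. f (Suc m) = Suc m} = Obj m P V"
  proof (intro set_eqI iffI)
    fix f assume f: "f \<in> {f\<in>Obj (Suc m) P V. f (Suc m) = Suc m}"
    hence f1: "f \<in> Obj (Suc m) P V" and fn: "f (Suc m) = Suc m" by auto
    have b: "bij_betw f ({1..m} \<union> P) ({1..m} \<union> V)"
      using H1[OF objD(1)[OF f1], of "Suc m"] fn nD nR by simp
    have "f ` P \<subseteq> {1..m}"
    proof
      fix y assume "y \<in> f ` P"
      then obtain p where p: "p \<in> P" "y = f p" by blast
      have "f p \<noteq> Suc m" using objD_inj[OF f1, of p "Suc m"] fn p Pgt by fastforce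
      thus "y \<in> {1..m}" using objD(2)[OF f1] p by auto
    qed
    moreover have "\<forall>x. x \<notin> {1..m} \<union> P \<longrightarrow> f x = x" using objD(3)[OF f1] fn by (metis insert_iff)
    ultimately show "f \<in> Obj m P V" using b unfolding Obj_def by auto
  next
    fix f assume f: "f \<in> Obj m P V"
    have fn: "f (Suc m) = Suc m" using f nD unfolding Obj_def by auto
    have b: "bij_betw f ({1..m} \<union> P) ({1..m} \<union> V)" using f unfolding Obj_def by auto
    have "bij_betw (f(Suc m := Suc m)) (insert (Suc m) ({1..m} \<union> P)) (insert (Suc m) ({1..m} \<union> V))"
      by (rule H2[OF b nD nR])
    hence "bij_betw f ({1..Suc m} \<union> P) ({1..Suc m} \<union> V)" using fn Dn Rn by (simp add: fun_upd_idem)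
    moreover have "f ` P \<subseteq> {1..Suc m}" using f unfolding Obj_def by auto
    moreover have "\<forall>x. x \<notin> {1..Suc m} \<union> P \<longrightarrow> f x = x" using f unfolding Obj_def by auto
    ultimately show "f \<in> {f\<in>Obj (Suc m) P V. f (Suc m) = Suc m}" using fn unfolding Obj_def by auto
  qed
  show ?thesis unfolding eq G_def sum_distrib_left
  proof (rule sum.cong[OF refl])
    fix f assume f: "f \<in> Obj m P V"
    hence "f \<in> Obj (Suc m) P V" using eq by auto
    thus "monom (1::int) (dd (Suc m) f) = monom 1 (card V) * monom 1 (dd m f)" using wt[of f f] by simp
  qed
qed

lemma comp_tt: "(f \<circ> transpose a b) \<circ> transpose a b = f"
  by (simp add: comp_assoc)

lemma blockC:
  assumes v: "v \<in> V" and x: "x \<in> {1..m}"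
  shows "(\<Sum>f\<in>{f\<in>Obj (Suc m) P V. f (Suc m) = v \<and> f x = Suc m}. monom (1::int) (dd (Suc m) f))
       = monom 1 (card V) * (\<Sum>f\<in>{f\<in>Obj m P V. f x = v}. monom 1 (dd m f))"
proof -
  let ?t = "transpose x (Suc m)"
  let ?D = "insert (Suc m) ({1..m} \<union> P)" and ?R = "insert (Suc m) ({1..m} \<union> V)"
  have xn: "x \<noteq> Suc m" using x by auto
  have perm: "bij_betw ?t ?D ?D"
    by (rule permutes_imp_bij[OF permutes_swap_id]) (use x in auto)
  show ?thesis unfolding sum_distrib_left
  proof (rule sum.reindex_bij_witness[where i="\<lambda>f. f \<circ> ?t" and j = "\<lambda>f. f \<circ> ?t"])
    fix f assume "f \<in> {f\<in>Obj (Suc m) P V. f (Suc m) = v \<and> f x = Suc m}"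
    hence f1: "f \<in> Obj (Suc m) P V" and fn: "f (Suc m) = v" and fx: "f x = Suc m" by auto
    show "(f \<circ> ?t) \<circ> ?t = f" by (rule comp_tt)
    have bg: "bij_betw (f \<circ> ?t) ?D ?R" by (rule bij_betw_trans[OF perm objD(1)[OF f1]])
    have gn: "(f \<circ> ?t) (Suc m) = Suc m" using fx by simp
    have b: "bij_betw (f \<circ> ?t) ({1..m} \<union> P) ({1..m} \<union> V)"
      using H1[OF bg, of "Suc m"] gn nD nR by simp
    have gP: "(f \<circ> ?t) ` P \<subseteq> {1..m}"
    proof
      fix y assume "y \<in> (f \<circ> ?t) ` P"
      then obtain p where p: "p \<in> P" "y = (f \<circ> ?t) p" by blast
      have pn: "p \<noteq> Suc m" "p \<noteq> x" using Pgt[OF p(1)] x by auto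
      have "f p \<noteq> Suc m" using objD_inj[OF f1, of p x] fx p(1) pn x by auto
      moreover have "f p \<in> {1..Suc m}" using objD(2)[OF f1] p(1) by auto
      ultimately show "y \<in> {1..m}" using p pn by auto
    qed
    have gout: "\<forall>z. z \<notin> {1..m} \<union> P \<longrightarrow> (f \<circ> ?t) z = z"
    proof (intro allI impI)
      fix z assume z: "z \<notin> {1..m} \<union> P"
      show "(f \<circ> ?t) z = z"
      proof (cases "z = Suc m")
        case True thus ?thesis using gn by simp
      next
        case False
        hence "z \<noteq> x" "z \<notin> ?D" using z x by auto
        thus ?thesis using objD(3)[OF f1] False by simp
      qed
    qed
    show "f \<circ> ?t \<in> {f\<in>Obj m P V. f x = v}" using b gP gout fn unfolding Obj_def by simp
    show "monom 1 (card V) * monom 1 (dd m (f \<circ> ?t)) = monom (1::int) (dd (Suc m) f)"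
    proof (rule wt[symmetric, OF f1])
      fix z assume z: "z \<in> {1..m}"
      show "f z = (f \<circ> ?t) z \<or> (m < f z \<and> m < (f \<circ> ?t) z)"
      proof (cases "z = x")
        case True thus ?thesis using fx fn Vgt[OF v] by simp
      next
        case False thus ?thesis using z by simp
      qed
    qed
  next
    fix f assume "f \<in> {f\<in>Obj m P V. f x = v}"
    hence f1: "f \<in> Obj m P V" and fx: "f x = v" by auto
    show "(f \<circ> ?t) \<circ> ?t = f" by (rule comp_tt)
    have fn: "f (Suc m) = Suc m" using f1 nD unfolding Obj_def by auto
    have b0: "bij_betw f ({1..m} \<union> P) ({1..m} \<union> V)" using f1 unfolding Obj_def by auto
    have "bij_betw (f(Suc m := Suc m)) ?D ?R" by (rule H2[OF b0 nD nR])
    hence "bij_betw f ?D ?R" using fn by (simp add: fun_upd_idem)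
    hence bg: "bij_betw (f \<circ> ?t) ({1..Suc m} \<union> P) ({1..Suc m} \<union> V)"
      unfolding Dn Rn by (rule bij_betw_trans[OF perm])
    have gP: "(f \<circ> ?t) ` P \<subseteq> {1..Suc m}"
    proof
      fix y assume "y \<in> (f \<circ> ?t) ` P"
      then obtain p where p: "p \<in> P" "y = (f \<circ> ?t) p" by blast
      have pn: "p \<noteq> Suc m" "p \<noteq> x" using Pgt[OF p(1)] x by auto
      have "f p \<in> {1..m}" using f1 p(1) unfolding Obj_def by auto
      thus "y \<in> {1..Suc m}" using p pn by auto
    qed
    have gout: "\<forall>z. z \<notin> {1..Suc m} \<union> P \<longrightarrow> (f \<circ> ?t) z = z"
    proof (intro allI impI)
      fix z assume z: "z \<notin> {1..Suc m} \<union> P"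
      hence "z \<noteq> x" "z \<noteq> Suc m" "z \<notin> {1..m} \<union> P" using x by auto
      thus "(f \<circ> ?t) z = z" using f1 unfolding Obj_def by simp
    qed
    show "f \<circ> ?t \<in> {f\<in>Obj (Suc m) P V. f (Suc m) = v \<and> f x = Suc m}"
      using bg gP gout fx fn xn unfolding Obj_def by simp
  qed
qed

lemma blockD:
  assumes p: "p \<in> P" and y: "y \<in> {1..m}"
  shows "(\<Sum>f\<in>{f\<in>Obj (Suc m) P V. f (Suc m) = y \<and> f p = Suc m}. monom (1::int) (dd (Suc m) f))
       = monom 1 (card V) * (\<Sum>f\<in>{f\<in>Obj m P V. f p = y}. monom 1 (dd m f))"
proof -
  let ?t = "transpose p (Suc m)"
  let ?D = "insert (Suc m) ({1..m} \<union> P)" and ?R = "insert (Suc m) ({1..m} \<union> V)"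
  have pn: "p \<noteq> Suc m" "p \<notin> {1..m}" using Pgt[OF p] by auto
  have perm: "bij_betw ?t ?D ?D"
    by (rule permutes_imp_bij[OF permutes_swap_id]) (use p in auto)
  show ?thesis unfolding sum_distrib_left
  proof (rule sum.reindex_bij_witness[where i="\<lambda>f. f \<circ> ?t" and j = "\<lambda>f. f \<circ> ?t"])
    fix f assume "f \<in> {f\<in>Obj (Suc m) P V. f (Suc m) = y \<and> f p = Suc m}"
    hence f1: "f \<in> Obj (Suc m) P V" and fn: "f (Suc m) = y" and fp: "f p = Suc m" by auto
    show "(f \<circ> ?t) \<circ> ?t = f" by (rule comp_tt)
    have bg: "bij_betw (f \<circ> ?t) ?D ?R" by (rule bij_betw_trans[OF perm objD(1)[OF f1]])
    have gn: "(f \<circ> ?t) (Suc m) = Suc m" using fp by simp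
    have b: "bij_betw (f \<circ> ?t) ({1..m} \<union> P) ({1..m} \<union> V)"
      using H1[OF bg, of "Suc m"] gn nD nR by simp
    have gP: "(f \<circ> ?t) ` P \<subseteq> {1..m}"
    proof
      fix w assume "w \<in> (f \<circ> ?t) ` P"
      then obtain q where q: "q \<in> P" "w = (f \<circ> ?t) q" by blast
      show "w \<in> {1..m}"
      proof (cases "q = p")
        case True thus ?thesis using q fn y by simp
      next
        case False
        have qn: "q \<noteq> Suc m" using Pgt[OF q(1)] by auto
        have "f q \<noteq> Suc m" using objD_inj[OF f1, of q p] fp q(1) p False by auto
        moreover have "f q \<in> {1..Suc m}" using objD(2)[OF f1] q(1) by auto
        ultimately show ?thesis using q qn False by auto
      qed
    qed
    have gout: "\<forall>z. z \<notin> {1..m} \<union> P \<longrightarrow> (f \<circ> ?t) z = z"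
    proof (intro allI impI)
      fix z assume z: "z \<notin> {1..m} \<union> P"
      show "(f \<circ> ?t) z = z"
      proof (cases "z = Suc m")
        case True thus ?thesis using gn by simp
      next
        case False
        hence "z \<noteq> p" "z \<notin> ?D" using z p by auto
        thus ?thesis using objD(3)[OF f1] False by simp
      qed
    qed
    show "f \<circ> ?t \<in> {f\<in>Obj m P V. f p = y}" using b gP gout fn unfolding Obj_def by simp
    show "monom 1 (card V) * monom 1 (dd m (f \<circ> ?t)) = monom (1::int) (dd (Suc m) f)"
    proof (rule wt[symmetric, OF f1])
      fix z assume z: "z \<in> {1..m}"
      hence "z \<noteq> p" "z \<noteq> Suc m" using pn by auto
      thus "f z = (f \<circ> ?t) z \<or> (m < f z \<and> m < (f \<circ> ?t) z)" by simp
    qed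
  next
    fix f assume "f \<in> {f\<in>Obj m P V. f p = y}"
    hence f1: "f \<in> Obj m P V" and fp: "f p = y" by auto
    show "(f \<circ> ?t) \<circ> ?t = f" by (rule comp_tt)
    have fn: "f (Suc m) = Suc m" using f1 nD unfolding Obj_def by auto
    have b0: "bij_betw f ({1..m} \<union> P) ({1..m} \<union> V)" using f1 unfolding Obj_def by auto
    have "bij_betw (f(Suc m := Suc m)) ?D ?R" by (rule H2[OF b0 nD nR])
    hence "bij_betw f ?D ?R" using fn by (simp add: fun_upd_idem)
    hence bg: "bij_betw (f \<circ> ?t) ({1..Suc m} \<union> P) ({1..Suc m} \<union> V)"
      unfolding Dn Rn by (rule bij_betw_trans[OF perm])
    have gP: "(f \<circ> ?t) ` P \<subseteq> {1..Suc m}"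
    proof
      fix w assume "w \<in> (f \<circ> ?t) ` P"
      then obtain q where q: "q \<in> P" "w = (f \<circ> ?t) q" by blast
      show "w \<in> {1..Suc m}"
      proof (cases "q = p")
        case True thus ?thesis using q fn by simp
      next
        case False
        have qn: "q \<noteq> Suc m" using Pgt[OF q(1)] by auto
        have "f q \<in> {1..m}" using f1 q(1) unfolding Obj_def by auto
        thus ?thesis using q qn False by auto
      qed
    qed
    have gout: "\<forall>z. z \<notin> {1..Suc m} \<union> P \<longrightarrow> (f \<circ> ?t) z = z"
    proof (intro allI impI)
      fix z assume z: "z \<notin> {1..Suc m} \<union> P"
      hence "z \<noteq> p" "z \<noteq> Suc m" "z \<notin> {1..m} \<union> P" using p by auto
      thus "(f \<circ> ?t) z = z" using f1 unfolding Obj_def by simp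
    qed
    show "f \<circ> ?t \<in> {f\<in>Obj (Suc m) P V. f (Suc m) = y \<and> f p = Suc m}"
      using bg gP gout fp fn pn unfolding Obj_def by simp
  qed
qed

lemma blockB:
  assumes v: "v \<in> V" and p: "p \<in> P"
  shows "(\<Sum>f\<in>{f\<in>Obj (Suc m) P V. f (Suc m) = v \<and> f p = Suc m}. monom (1::int) (dd (Suc m) f))
       = monom 1 (card V) * G m (P - {p}) (V - {v})"
proof -
  let ?D = "insert (Suc m) ({1..m} \<union> P)" and ?R = "insert (Suc m) ({1..m} \<union> V)"
  let ?D' = "{1..m} \<union> (P - {p})" and ?R' = "{1..m} \<union> (V - {v})"
  have pn: "p \<noteq> Suc m" "p \<notin> {1..m}" using Pgt[OF p] by auto
  have vn: "v \<noteq> Suc m" "v \<notin> {1..m}" using Vgt[OF v] by auto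
  show ?thesis unfolding sum_distrib_left G_def
  proof (rule sum.reindex_bij_witness[where j="\<lambda>f. f(p := p, Suc m := Suc m)" and i = "\<lambda>f. f(p := Suc m, Suc m := v)"])
    fix f assume "f \<in> {f\<in>Obj (Suc m) P V. f (Suc m) = v \<and> f p = Suc m}"
    hence f1: "f \<in> Obj (Suc m) P V" and fn: "f (Suc m) = v" and fp: "f p = Suc m" by auto
    show "f(p := p, Suc m := Suc m, p := Suc m, Suc m := v) = f"
      using fn fp by (auto simp: fun_eq_iff)
    have b1: "bij_betw f (?D - {Suc m}) (?R - {v})" using H1[OF objD(1)[OF f1], of "Suc m"] fn by simp
    have "bij_betw f (?D - {Suc m} - {p}) (?R - {v} - {Suc m})"
      using H1[OF b1, of p] fp p pn by simp
    moreover have "?D - {Suc m} - {p} = ?D'" "?R - {v} - {Suc m} = ?R'" using nD nR pn vn by auto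
    ultimately have b2: "bij_betw f ?D' ?R'" by simp
    have b: "bij_betw (f(p := p, Suc m := Suc m)) ?D' ?R'"
      using b2 by (rule bij_betw_cong[THEN iffD1, rotated]) (use pn nD in auto)
    have gP: "f(p := p, Suc m := Suc m) ` (P - {p}) \<subseteq> {1..m}"
    proof
      fix w assume "w \<in> f(p := p, Suc m := Suc m) ` (P - {p})"
      then obtain q where q0: "q \<in> P" "q \<noteq> p" "w = (f(p := p, Suc m := Suc m)) q" by blast
      have "q \<noteq> Suc m" using Pgt[OF q0(1)] by auto
      hence q: "q \<in> P" "q \<noteq> p" "w = f q" using q0 by auto
      have "f q \<noteq> Suc m" using objD_inj[OF f1, of q p] fp q p by auto
      moreover have "f q \<in> {1..Suc m}" using objD(2)[OF f1] q(1) by auto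
      ultimately show "w \<in> {1..m}" using q by auto
    qed
    have gout: "\<forall>z. z \<notin> ?D' \<longrightarrow> (f(p := p, Suc m := Suc m)) z = z"
    proof (intro allI impI)
      fix z assume z: "z \<notin> ?D'"
      show "(f(p := p, Suc m := Suc m)) z = z"
        using objD(3)[OF f1, of z] z by auto
    qed
    show "f(p := p, Suc m := Suc m) \<in> Obj m (P - {p}) (V - {v})"
      using b gP gout unfolding Obj_def by simp
    show "monom 1 (card V) * monom 1 (dd m (f(p := p, Suc m := Suc m))) = monom (1::int) (dd (Suc m) f)"
    proof (rule wt[symmetric, OF f1])
      fix z assume z: "z \<in> {1..m}"
      hence "z \<noteq> p" "z \<noteq> Suc m" using pn by auto
      thus "f z = (f(p := p, Suc m := Suc m)) z \<or> (m < f z \<and> m < (f(p := p, Suc m := Suc m)) z)" by simp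
    qed
  next
    fix f assume f1: "f \<in> Obj m (P - {p}) (V - {v})"
    have fp: "f p = p" and fn: "f (Suc m) = Suc m" using f1 pn nD unfolding Obj_def by auto
    show "f(p := Suc m, Suc m := v, p := p, Suc m := Suc m) = f"
      using fn fp by (auto simp: fun_eq_iff)
    have b0: "bij_betw f ?D' ?R'" using f1 unfolding Obj_def by auto
    have pD': "p \<notin> ?D'" and nR': "Suc m \<notin> ?R'" using pn nR by auto
    have b1: "bij_betw (f(p := Suc m)) (insert p ?D') (insert (Suc m) ?R')" by (rule H2[OF b0 pD' nR'])
    have "Suc m \<notin> insert p ?D'" "v \<notin> insert (Suc m) ?R'" using pn nD vn by auto
    from H2[OF b1 this] have "bij_betw (f(p := Suc m, Suc m := v)) (insert (Suc m) (insert p ?D')) (insert v (insert (Suc m) ?R'))" .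
    moreover have "insert (Suc m) (insert p ?D') = {1..Suc m} \<union> P" "insert v (insert (Suc m) ?R') = {1..Suc m} \<union> V"
      using p v by auto
    ultimately have b: "bij_betw (f(p := Suc m, Suc m := v)) ({1..Suc m} \<union> P) ({1..Suc m} \<union> V)" by simp
    have gP: "f(p := Suc m, Suc m := v) ` P \<subseteq> {1..Suc m}"
    proof
      fix w assume "w \<in> f(p := Suc m, Suc m := v) ` P"
      then obtain q where q: "q \<in> P" "w = (f(p := Suc m, Suc m := v)) q" by blast
      show "w \<in> {1..Suc m}"
      proof (cases "q = p")
        case True thus ?thesis using q pn by simp
      next
        case False
        have qn: "q \<noteq> Suc m" using Pgt[OF q(1)] by auto
        have "f q \<in> {1..m}" using f1 q(1) False unfolding Obj_def by auto
        thus ?thesis using q qn False by auto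
      qed
    qed
    have gout: "\<forall>z. z \<notin> {1..Suc m} \<union> P \<longrightarrow> (f(p := Suc m, Suc m := v)) z = z"
    proof (intro allI impI)
      fix z assume z: "z \<notin> {1..Suc m} \<union> P"
      hence "z \<noteq> p" "z \<noteq> Suc m" "z \<notin> ?D'" using p by auto
      thus "(f(p := Suc m, Suc m := v)) z = z" using f1 unfolding Obj_def by simp
    qed
    show "f(p := Suc m, Suc m := v) \<in> {f\<in>Obj (Suc m) P V. f (Suc m) = v \<and> f p = Suc m}"
      using b gP gout pn unfolding Obj_def by simp
  qed
qed

lemma blockE:
  assumes y: "y \<in> {1..m}" and x: "x \<in> {1..m}"
  shows "(\<Sum>f\<in>{f\<in>Obj (Suc m) P V. f (Suc m) = y \<and> f x = Suc m}. monom (1::int) (dd (Suc m) f))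
       = monom 1 (card V) * (\<Sum>f\<in>{f\<in>Obj m (insert (Suc m) P) (insert (Suc m) V). f (Suc m) = y \<and> f x = Suc m}. monom 1 (dd m f))"
proof -
  have eq: "{f\<in>Obj (Suc m) P V. f (Suc m) = y \<and> f x = Suc m}
          = {f\<in>Obj m (insert (Suc m) P) (insert (Suc m) V). f (Suc m) = y \<and> f x = Suc m}"
  proof (intro set_eqI iffI)
    fix f assume "f \<in> {f\<in>Obj (Suc m) P V. f (Suc m) = y \<and> f x = Suc m}"
    hence f1: "f \<in> Obj (Suc m) P V" and fn: "f (Suc m) = y" and fx: "f x = Suc m" by auto
    have "f ` insert (Suc m) P \<subseteq> {1..m}"
    proof
      fix w assume "w \<in> f ` insert (Suc m) P"
      then obtain q where q: "q \<in> insert (Suc m) P" "w = f q" by blast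
      show "w \<in> {1..m}"
      proof (cases "q = Suc m")
        case True thus ?thesis using q fn y by simp
      next
        case False
        hence qP: "q \<in> P" using q by auto
        have "f q \<noteq> Suc m" using objD_inj[OF f1, of q x] fx qP x Pgt[OF qP] by auto
        moreover have "f q \<in> {1..Suc m}" using objD(2)[OF f1] qP by auto
        ultimately show ?thesis using q by auto
      qed
    qed
    moreover have "{1..m} \<union> insert (Suc m) P = {1..Suc m} \<union> P" "{1..m} \<union> insert (Suc m) V = {1..Suc m} \<union> V" by auto
    ultimately show "f \<in> {f\<in>Obj m (insert (Suc m) P) (insert (Suc m) V). f (Suc m) = y \<and> f x = Suc m}"
      using f1 fn fx unfolding Obj_def by simp
  next
    fix f assume "f \<in> {f\<in>Obj m (insert (Suc m) P) (insert (Suc m) V). f (Suc m) = y \<and> f x = Suc m}"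
    hence f1: "f \<in> Obj m (insert (Suc m) P) (insert (Suc m) V)" and fn: "f (Suc m) = y" and fx: "f x = Suc m" by auto
    have "{1..m} \<union> insert (Suc m) P = {1..Suc m} \<union> P" "{1..m} \<union> insert (Suc m) V = {1..Suc m} \<union> V" by auto
    moreover have "f ` P \<subseteq> {1..Suc m}" using f1 unfolding Obj_def by auto
    ultimately show "f \<in> {f\<in>Obj (Suc m) P V. f (Suc m) = y \<and> f x = Suc m}"
      using f1 fn fx unfolding Obj_def by simp
  qed
  show ?thesis unfolding eq sum_distrib_left
  proof (rule sum.cong[OF refl])
    fix f assume "f \<in> {f\<in>Obj m (insert (Suc m) P) (insert (Suc m) V). f (Suc m) = y \<and> f x = Suc m}"
    hence "f \<in> Obj (Suc m) P V" using eq by auto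
    thus "monom (1::int) (dd (Suc m) f) = monom 1 (card V) * monom 1 (dd m f)" using wt[of f f] by simp
  qed
qed

end


lemma GL2:
  assumes "finite S" "finite A" "finite B"
    "\<And>f. f \<in> S \<Longrightarrow> \<exists>!a. a \<in> A \<and> Ra f a" "\<And>f. f \<in> S \<Longrightarrow> \<exists>!b. b \<in> B \<and> Rb f b"
  shows "(\<Sum>a\<in>A. \<Sum>b\<in>B. \<Sum>f\<in>{f\<in>S. Ra f a \<and> Rb f b}. g f) = (\<Sum>f\<in>S. g f)"
proof -
  have "(\<Sum>a\<in>A. \<Sum>b\<in>B. \<Sum>f\<in>{f\<in>S. Ra f a \<and> Rb f b}. g f) = (\<Sum>a\<in>A. \<Sum>f\<in>{f\<in>S. Ra f a}. g f)"
  proof (rule sum.cong[OF refl])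
    fix a assume "a \<in> A"
    have "(\<Sum>b\<in>B. \<Sum>f\<in>{f\<in>{f\<in>S. Ra f a}. Rb f b}. g f) = (\<Sum>f\<in>{f\<in>S. Ra f a}. g f)"
      by (rule GL) (use assms in auto)
    moreover have "\<And>b. {f\<in>{f\<in>S. Ra f a}. Rb f b} = {f\<in>S. Ra f a \<and> Rb f b}" by auto
    ultimately show "(\<Sum>b\<in>B. \<Sum>f\<in>{f\<in>S. Ra f a \<and> Rb f b}. g f) = (\<Sum>f\<in>{f\<in>S. Ra f a}. g f)" by simp
  qed
  also have "\<dots> = (\<Sum>f\<in>S. g f)" by (rule GL) (use assms in auto)
  finally show ?thesis .
qed

lemma preim:
  assumes "f \<in> Obj k Q W" "w \<in> W" "w \<notin> {1..k}"
  shows "\<exists>!x. x \<in> {1..k} \<and> f x = w"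
proof -
  have bij: "bij_betw f ({1..k} \<union> Q) ({1..k} \<union> W)" and fQ: "f ` Q \<subseteq> {1..k}"
    using assms(1) unfolding Obj_def by auto
  have inj: "inj_on f ({1..k} \<union> Q)" using bij by (simp add: bij_betw_def)
  have "w \<in> f ` ({1..k} \<union> Q)" using bij assms(2) unfolding bij_betw_def by blast
  then obtain x where x: "x \<in> {1..k} \<union> Q" "f x = w" by blast
  have xk: "x \<in> {1..k}"
  proof (rule ccontr)
    assume "x \<notin> {1..k}"
    hence "x \<in> Q" using x(1) by blast
    hence "f x \<in> {1..k}" using fQ by blast
    thus False using x(2) assms(3) by simp
  qed
  have "\<And>y. y \<in> {1..k} \<Longrightarrow> f y = w \<Longrightarrow> y = x"
  proof -
    fix y assume y: "y \<in> {1..k}" "f y = w"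
    have "y \<in> {1..k} \<union> Q" using y(1) by (rule UnI1)
    moreover have "f y = f x" using y(2) x(2) by simp
    ultimately show "y = x" using inj_onD[OF inj] x(1) by blast
  qed
  thus ?thesis using xk x(2) by blast
qed

context
  fixes m :: nat and P V :: "nat set"
  assumes gd: "good (Suc m) P V"
begin

lemma rec:
  "G (Suc m) P V = monom 1 (card V) * (G m P V + (\<Sum>v\<in>V. \<Sum>p\<in>P. G m (P-{p}) (V-{v}))
     + (\<Sum>v\<in>V. G m P V) + (\<Sum>p\<in>P. G m P V) + G m (insert (Suc m) P) (insert (Suc m) V))"
proof -
  let ?S = "Obj (Suc m) P V"
  let ?w = "\<lambda>f. monom (1::int) (dd (Suc m) f)"
  let ?W = "\<lambda>a b. (\<Sum>f\<in>{f\<in>?S. f (Suc m) = a \<and> f b = Suc m}. ?w f)"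
  let ?h = "monom (1::int) (card V)"
  have fP: "finite P" and fV: "finite V" using finP[OF gd] finV[OF gd] .
  have finS: "finite ?S" by (rule finite_Obj[OF fP fV])
  let ?S2 = "{f\<in>?S. f (Suc m) \<noteq> Suc m}"
  have "?S = {f\<in>?S. f (Suc m) = Suc m} \<union> ?S2" by auto
  hence e1: "sum ?w ?S = sum ?w ({f\<in>?S. f (Suc m) = Suc m} \<union> ?S2)" by (rule arg_cong)
  have "sum ?w ({f\<in>?S. f (Suc m) = Suc m} \<union> ?S2) = sum ?w {f\<in>?S. f (Suc m) = Suc m} + sum ?w ?S2"
    by (rule sum.union_disjoint) (use finS in auto)
  with e1 have split: "sum ?w ?S = sum ?w {f\<in>?S. f (Suc m) = Suc m} + sum ?w ?S2" by simp
  have s2: "sum ?w ?S2 = (\<Sum>a\<in>{1..m} \<union> V. \<Sum>b\<in>{1..m} \<union> P. \<Sum>f\<in>{f\<in>?S2. f (Suc m) = a \<and> f b = Suc m}. ?w f)"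
  proof (rule GL2[where Ra="\<lambda>f a. f (Suc m) = a" and Rb="\<lambda>f b. f b = Suc m" and g="?w" and S="?S2" and A="{1..m} \<union> V" and B="{1..m} \<union> P", symmetric])
    show "finite ?S2" using finS by simp
    show "finite ({1..m} \<union> V)" "finite ({1..m} \<union> P)" using fP fV by auto
  next
    fix f assume f: "f \<in> ?S2"
    hence f1: "f \<in> ?S" and fn: "f (Suc m) \<noteq> Suc m" by auto
    have bj: "bij_betw f (insert (Suc m) ({1..m} \<union> P)) (insert (Suc m) ({1..m} \<union> V))"
      by (rule objD(1)[OF gd f1])
    have "f (Suc m) \<in> insert (Suc m) ({1..m} \<union> V)"
      by (rule bij_betw_apply[OF bj]) simp
    hence "f (Suc m) \<in> {1..m} \<union> V" using fn by simp
    thus "\<exists>!a. a \<in> {1..m} \<union> V \<and> f (Suc m) = a" by blast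
    have "f ` insert (Suc m) ({1..m} \<union> P) = insert (Suc m) ({1..m} \<union> V)"
      using bj by (simp add: bij_betw_def)
    hence "Suc m \<in> f ` insert (Suc m) ({1..m} \<union> P)" by simp
    then obtain b where b0: "Suc m = f b" "b \<in> insert (Suc m) ({1..m} \<union> P)" by (rule imageE)
    hence b: "b \<in> insert (Suc m) ({1..m} \<union> P)" "f b = Suc m" by simp_all
    have "b \<noteq> Suc m" using b(2) fn by auto
    hence b2: "b \<in> {1..m} \<union> P" using b(1) by simp
    have uq: "c = b" if c: "c \<in> {1..m} \<union> P" "f c = Suc m" for c
    proof (rule objD_inj[OF gd f1])
      show "c \<in> insert (Suc m) ({1..m} \<union> P)" using c(1) by simp
      show "b \<in> insert (Suc m) ({1..m} \<union> P)" by (rule b(1))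
      show "f c = f b" using c(2) b(2) by simp
    qed
    show "\<exists>!b. b \<in> {1..m} \<union> P \<and> f b = Suc m"
      using b2 b(2) uq by blast
  qed
  also have "\<dots> = (\<Sum>a\<in>{1..m} \<union> V. \<Sum>b\<in>{1..m} \<union> P. ?W a b)"
  proof (rule sum.cong[OF refl], rule sum.cong[OF refl])
    fix a b assume "a \<in> {1..m} \<union> V"
    hence "a \<noteq> Suc m" using nR[OF gd] by auto
    hence "{f\<in>?S2. f (Suc m) = a \<and> f b = Suc m} = {f\<in>?S. f (Suc m) = a \<and> f b = Suc m}" by auto
    thus "(\<Sum>f\<in>{f\<in>?S2. f (Suc m) = a \<and> f b = Suc m}. ?w f) = ?W a b" by simp
  qed
  also have "\<dots> = (\<Sum>a\<in>{1..m}. \<Sum>b\<in>{1..m}. ?W a b) + (\<Sum>a\<in>{1..m}. \<Sum>b\<in>P. ?W a b)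
      + (\<Sum>a\<in>V. \<Sum>b\<in>{1..m}. ?W a b) + (\<Sum>a\<in>V. \<Sum>b\<in>P. ?W a b)"
  proof -
    have d1: "{1..m} \<inter> V = {}" and d2: "{1..m} \<inter> P = {}" using Vgt[OF gd] Pgt[OF gd] by force+
    have "\<And>a. (\<Sum>b\<in>{1..m} \<union> P. ?W a b) = (\<Sum>b\<in>{1..m}. ?W a b) + (\<Sum>b\<in>P. ?W a b)"
      by (rule sum.union_disjoint) (use fP d2 in auto)
    hence "(\<Sum>a\<in>{1..m} \<union> V. \<Sum>b\<in>{1..m} \<union> P. ?W a b) = (\<Sum>a\<in>{1..m} \<union> V. (\<Sum>b\<in>{1..m}. ?W a b) + (\<Sum>b\<in>P. ?W a b))"
      by simp
    also have "\<dots> = (\<Sum>a\<in>{1..m}. (\<Sum>b\<in>{1..m}. ?W a b) + (\<Sum>b\<in>P. ?W a b)) + (\<Sum>a\<in>V. (\<Sum>b\<in>{1..m}. ?W a b) + (\<Sum>b\<in>P. ?W a b))"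
      by (rule sum.union_disjoint) (use fV d1 in auto)
    finally show ?thesis by (simp add: sum.distrib add.assoc)
  qed
  finally have s2': "sum ?w ?S2 = (\<Sum>a\<in>{1..m}. \<Sum>b\<in>{1..m}. ?W a b) + (\<Sum>a\<in>{1..m}. \<Sum>b\<in>P. ?W a b)
      + (\<Sum>a\<in>V. \<Sum>b\<in>{1..m}. ?W a b) + (\<Sum>a\<in>V. \<Sum>b\<in>P. ?W a b)" .
  let ?S' = "Obj m (insert (Suc m) P) (insert (Suc m) V)"
  have gE: "(\<Sum>a\<in>{1..m}. \<Sum>b\<in>{1..m}. ?W a b) = ?h * G m (insert (Suc m) P) (insert (Suc m) V)"
  proof -
    have "(\<Sum>a\<in>{1..m}. \<Sum>b\<in>{1..m}. ?W a b) = (\<Sum>a\<in>{1..m}. \<Sum>b\<in>{1..m}. ?h * (\<Sum>f\<in>{f\<in>?S'. f (Suc m) = a \<and> f b = Suc m}. monom 1 (dd m f)))"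
      by (rule sum.cong[OF refl], rule sum.cong[OF refl], rule blockE[OF gd]) auto
    also have "\<dots> = ?h * (\<Sum>a\<in>{1..m}. \<Sum>b\<in>{1..m}. \<Sum>f\<in>{f\<in>?S'. f (Suc m) = a \<and> f b = Suc m}. monom 1 (dd m f))"
      by (simp add: sum_distrib_left)
    also have "(\<Sum>a\<in>{1..m}. \<Sum>b\<in>{1..m}. \<Sum>f\<in>{f\<in>?S'. f (Suc m) = a \<and> f b = Suc m}. monom (1::int) (dd m f)) = G m (insert (Suc m) P) (insert (Suc m) V)"
      unfolding G_def
    proof (rule GL2[where Ra="\<lambda>f a. f (Suc m) = a" and Rb="\<lambda>f b. f b = Suc m" and S="?S'" and A="{1..m}" and B="{1..m}"])
      show "finite ?S'" by (rule finite_Obj) (use fP fV in auto)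
    next
      fix f assume f: "f \<in> ?S'"
      have "f (Suc m) \<in> {1..m}" using f unfolding Obj_def by auto
      thus "\<exists>!a. a \<in> {1..m} \<and> f (Suc m) = a" by auto
      show "\<exists>!b. b \<in> {1..m} \<and> f b = Suc m" by (rule preim[OF f]) auto
    qed auto
    finally show ?thesis .
  qed
  have gD: "(\<Sum>a\<in>{1..m}. \<Sum>b\<in>P. ?W a b) = (\<Sum>p\<in>P. ?h * G m P V)"
  proof -
    have "(\<Sum>a\<in>{1..m}. \<Sum>b\<in>P. ?W a b) = (\<Sum>b\<in>P. \<Sum>a\<in>{1..m}. ?W a b)" by (rule sum.swap)
    also have "\<dots> = (\<Sum>b\<in>P. \<Sum>a\<in>{1..m}. ?h * (\<Sum>f\<in>{f\<in>Obj m P V. f b = a}. monom 1 (dd m f)))"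
      by (rule sum.cong[OF refl], rule sum.cong[OF refl], rule blockD[OF gd]) auto
    also have "\<dots> = (\<Sum>p\<in>P. ?h * G m P V)"
    proof (intro sum.cong refl)
      fix p assume p: "p \<in> P"
      have "(\<Sum>a\<in>{1..m}. \<Sum>f\<in>{f\<in>Obj m P V. f p = a}. monom (1::int) (dd m f)) = G m P V"
        unfolding G_def
      proof (rule GL)
        show "finite (Obj m P V)" by (rule finite_Obj[OF fP fV])
        fix f assume "f \<in> Obj m P V"
        hence "f p \<in> {1..m}" using p unfolding Obj_def by auto
        thus "\<exists>!a. a \<in> {1..m} \<and> f p = a" by auto
      qed auto
      thus "(\<Sum>a\<in>{1..m}. ?h * (\<Sum>f\<in>{f\<in>Obj m P V. f p = a}. monom 1 (dd m f))) = ?h * G m P V"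
        by (simp add: sum_distrib_left[symmetric])
    qed
    finally show ?thesis .
  qed
  have gC: "(\<Sum>a\<in>V. \<Sum>b\<in>{1..m}. ?W a b) = (\<Sum>v\<in>V. ?h * G m P V)"
  proof -
    have "(\<Sum>a\<in>V. \<Sum>b\<in>{1..m}. ?W a b) = (\<Sum>a\<in>V. \<Sum>b\<in>{1..m}. ?h * (\<Sum>f\<in>{f\<in>Obj m P V. f b = a}. monom 1 (dd m f)))"
      by (rule sum.cong[OF refl], rule sum.cong[OF refl], rule blockC[OF gd]) auto
    also have "\<dots> = (\<Sum>v\<in>V. ?h * G m P V)"
    proof (intro sum.cong refl)
      fix v assume v: "v \<in> V"
      have "(\<Sum>b\<in>{1..m}. \<Sum>f\<in>{f\<in>Obj m P V. f b = v}. monom (1::int) (dd m f)) = G m P V"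
        unfolding G_def
      proof (rule GL)
        show "finite (Obj m P V)" by (rule finite_Obj[OF fP fV])
        fix f assume f: "f \<in> Obj m P V"
        show "\<exists>!b. b \<in> {1..m} \<and> f b = v" by (rule preim[OF f v]) (use Vgt[OF gd v] in auto)
      qed auto
      thus "(\<Sum>b\<in>{1..m}. ?h * (\<Sum>f\<in>{f\<in>Obj m P V. f b = v}. monom 1 (dd m f))) = ?h * G m P V"
        by (simp add: sum_distrib_left[symmetric])
    qed
    finally show ?thesis .
  qed
  have gB: "(\<Sum>a\<in>V. \<Sum>b\<in>P. ?W a b) = (\<Sum>v\<in>V. \<Sum>p\<in>P. ?h * G m (P-{p}) (V-{v}))"
    by (rule sum.cong[OF refl], rule sum.cong[OF refl], rule blockB[OF gd]) auto
  have gA: "sum ?w {f\<in>?S. f (Suc m) = Suc m} = ?h * G m P V" by (rule blockA[OF gd])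
  have "G (Suc m) P V = ?h * G m P V + (?h * G m (insert (Suc m) P) (insert (Suc m) V) + (\<Sum>p\<in>P. ?h * G m P V)
      + (\<Sum>v\<in>V. ?h * G m P V) + (\<Sum>v\<in>V. \<Sum>p\<in>P. ?h * G m (P-{p}) (V-{v})))"
    unfolding G_def[of "Suc m"] split gA s2' gE gD gC gB G_def[of m] ..
  thus ?thesis by (simp add: sum_distrib_left distrib_left add_ac)
qed

end




lemma G_ap: "good n P V \<Longrightarrow> G n P V = ap n (card V)"
proof (induction n arbitrary: P V)
  case 0
  have fP: "finite P" and fV: "finite V" and c: "card P = card V" using 0 unfolding good_def by auto
  show ?case
  proof (cases "card V = 0")
    case True
    hence V: "V = {}" and P: "P = {}" using fP fV c by auto
    have "Obj 0 {} {} = {id}"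
    proof (intro set_eqI iffI)
      fix f assume "f \<in> Obj 0 {} {}"
      hence "\<forall>x. f x = x" unfolding Obj_def by auto
      thus "f \<in> {id}" by (auto simp: fun_eq_iff)
    qed (simp add: Obj_def)
    thus ?thesis using V P by (simp add: G_def dd_def)
  next
    case False
    hence "P \<noteq> {}" using c by auto
    hence "Obj 0 P V = {}" unfolding Obj_def by auto
    thus ?thesis using False by (simp add: G_def)
  qed
next
  case (Suc m)
  let ?h = "card V"
  have gd: "good (Suc m) P V" by (rule Suc.prems)
  have fP: "finite P" and fV: "finite V" and c: "card P = card V"
    and Pg: "P \<subseteq> {Suc m<..}" and Vg: "V \<subseteq> {Suc m<..}" using gd unfolding good_def by auto
  have g1: "G m P V = ap m ?h" by (rule Suc.IH) (use fP fV c Pg Vg in \<open>auto simp: good_def\<close>)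
  have g2: "G m (P - {p}) (V - {v}) = ap m (?h - 1)" if p: "p \<in> P" and v: "v \<in> V" for p v
  proof -
    have "G m (P - {p}) (V - {v}) = ap m (card (V - {v}))"
      by (rule Suc.IH) (use fP fV c Pg Vg p v in \<open>auto simp: good_def\<close>)
    thus ?thesis using v fV by simp
  qed
  have nP: "Suc m \<notin> P" and nV: "Suc m \<notin> V" using Pg Vg by auto
  have g3: "G m (insert (Suc m) P) (insert (Suc m) V) = ap m (Suc ?h)"
  proof -
    have "G m (insert (Suc m) P) (insert (Suc m) V) = ap m (card (insert (Suc m) V))"
      by (rule Suc.IH) (use fP fV c Pg Vg nP nV in \<open>auto simp: good_def\<close>)
    thus ?thesis using nV fV by simp
  qed
  have "G (Suc m) P V = monom 1 ?h * (G m P V + (\<Sum>v\<in>V. \<Sum>p\<in>P. G m (P-{p}) (V-{v}))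
     + (\<Sum>v\<in>V. G m P V) + (\<Sum>p\<in>P. G m P V) + G m (insert (Suc m) P) (insert (Suc m) V))"
    by (rule rec[OF gd])
  also have "(\<Sum>v\<in>V. \<Sum>p\<in>P. G m (P-{p}) (V-{v})) = (\<Sum>v\<in>V. \<Sum>p\<in>P. ap m (?h - 1))"
    by (intro sum.cong refl g2)
  also have "\<dots> = of_nat (?h * ?h) * ap m (?h - 1)" using c by (simp add: mult.assoc)
  finally have "G (Suc m) P V = monom 1 ?h * (ap m ?h + of_nat (?h * ?h) * ap m (?h - 1) + of_nat ?h * ap m ?h + of_nat ?h * ap m ?h + ap m (Suc ?h))"
    using g1 g3 c by simp
  thus ?case by (simp add: algebra_simps)
qed

lemma card_filter_sum: "finite A \<Longrightarrow> card {x\<in>A. P x} = (\<Sum>x\<in>A. if P x then 1 else 0)"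
  by (subst card_eq_sum) (rule sum.inter_filter)

lemma dep_dd:
  assumes w: "w permutes {1..n}"
  shows "dep n w = dd n w"
proof -
  have wn: "\<And>x. x \<in> {1..n} \<Longrightarrow> w x \<in> {1..n}" using permutes_in_image[OF w] by simp
  have "dd n w = (\<Sum>j\<in>{1..n}. \<Sum>x\<in>{1..n}. if x \<le> j \<and> j < w x then 1 else 0)"
    unfolding dd_def
  proof (rule sum.cong[OF refl])
    fix j assume j: "j \<in> {1..n}"
    have "{x\<in>{1..j}. j < w x} = {x\<in>{1..n}. x \<le> j \<and> j < w x}" using j by auto
    thus "card {x\<in>{1..j}. j < w x} = (\<Sum>x\<in>{1..n}. if x \<le> j \<and> j < w x then 1 else 0)"
      using card_filter_sum[of "{1..n}" "\<lambda>x. x \<le> j \<and> j < w x"] by simp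
  qed
  also have "\<dots> = (\<Sum>x\<in>{1..n}. \<Sum>j\<in>{1..n}. if x \<le> j \<and> j < w x then 1 else 0)"
    by (rule sum.swap)
  also have "\<dots> = (\<Sum>x\<in>{1..n}. if w x > x then w x - x else 0)"
  proof (rule sum.cong[OF refl])
    fix x assume x: "x \<in> {1..n}"
    have "{j\<in>{1..n}. x \<le> j \<and> j < w x} = {x..<w x}" using x wn[OF x] by auto
    hence "(\<Sum>j\<in>{1..n}. if x \<le> j \<and> j < w x then 1 else 0) = card {x..<w x}"
      using card_filter_sum[of "{1..n}" "\<lambda>j. x \<le> j \<and> j < w x"] by simp
    thus "(\<Sum>j\<in>{1..n}. if x \<le> j \<and> j < w x then 1 else 0) = (if w x > x then w x - x else 0)" by simp
  qed
  finally show ?thesis unfolding dep_def by simp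
qed

lemma depPoly_G: "depPoly n = G n {} {}"
proof -
  have "Obj n {} {} = {w. w permutes {1..n}}"
  proof (intro set_eqI iffI)
    fix f assume "f \<in> Obj n {} {}"
    hence "bij_betw f {1..n} {1..n}" "\<And>x. x \<notin> {1..n} \<Longrightarrow> f x = x" unfolding Obj_def by auto
    thus "f \<in> {w. w permutes {1..n}}" by (auto intro: bij_imp_permutes)
  next
    fix f assume "f \<in> {w. w permutes {1..n}}"
    hence p: "f permutes {1..n}" by simp
    show "f \<in> Obj n {} {}" unfolding Obj_def
      using permutes_imp_bij[OF p] permutes_not_in[OF p] by auto
  qed
  thus ?thesis unfolding depPoly_def G_def by (intro sum.cong) (auto simp: dep_dd)
qed

theorem mainTheorem5:
  shows "(\<lambda>m. Sfrac cS m 0) \<longlonglongrightarrow> F"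
proof -
  have "F = tlS 0"
  proof (rule fps_ext)
    fix n
    have "good n {} {}" by (simp add: good_def)
    hence "depPoly n = ap n 0" using G_ap[of n "{}" "{}"] depPoly_G by simp
    moreover have "AA 0 = tlS 0" by (simp add: AA_def PP_0)
    ultimately show "F $ n = tlS 0 $ n" using AA_nth[of 0 n] by (simp add: F_def)
  qed
  thus ?thesis using conv by simp
qed


end
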